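(* Let $r \geq 2$, let $\mathcal{F}$ be a collection of $r$-uniform hypergraphs, let $0<p<1$, let $\epsilon>0$, and let $c = c(p,\mathcal{F})$. Then there exist $\eta, \gamma, \lambda > 0$, an integer $m$ and $n_0$ (depending only on $\mathcal{F}, p, \epsilon$) such that the following holds. Let $V$ be a vertex set of size $n > n_0$ and let $\mathcal{A}$ be a collection of $r$-uniform hypergraphs on $V$ with $\mu_n(\mathcal{A}) > 2^{(-c+\epsilon)\binom{n}{r}}$. Let $\mathcal{D} = \{D_1,\ldots,D_d\}$ be a partial Steiner system with parameters $(r,m,n)$ on $V$ with $d \geq (1-\lambda)\binom{n}{r}\binom{m}{r}^{-1}$. Let \[ I = \{ i \in [d] : \mu_n(\{G \in \mathcal{A} : \mathcal{F} < G[D_i]\}) \geq \gamma\, \mu_n(\mathcal{A})\}. \] Then $|I| \geq \eta d$.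
   Context: $G(k,p)$ denotes the random $r$-uniform hypergraph on $k$ labelled vertices in which each $r$-subset is an edge independently with probability $p$; for a collection $\mathcal{C}$ of $r$-uniform hypergraphs on a common $k$-vertex set, $\mu_k(\mathcal{C}) = \Pr[G(k,p) \in \mathcal{C}]$. The constant $c(p,\mathcal{F})$ is defined by $\Pr[G(n,p)$ has no induced subgraph isomorphic to a member of $\mathcal{F}] = 2^{(-c+o(1))\binom{n}{r}}$ as $n\to\infty$ (this limit exists). For a hypergraph $G$ and vertex subset $D$, $G[D]$ is the induced subhypergraph on $D$, and $\mathcal{F} < H$ means $H$ contains an induced subgraph isomorphic to a member of $\mathcal{F}$. A partial Steiner system with parameters $(r,m,n)$ on an $n$-set $V$ is a collection $\mathcal{D}$ of $m$-element subsets of $V$ such that every $r$-element subset of $V$ is contained in at most one member of $\mathcal{D}$. *)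

theory Defs
  imports Complex_Main
begin

definition rsets :: "nat \<Rightarrow> 'v set \<Rightarrow> 'v set set" where
  "rsets r V = {S. S \<subseteq> V \<and> card S = r}"

definition hyps :: "nat \<Rightarrow> 'v set \<Rightarrow> 'v set set set" where
  "hyps r V = Pow (rsets r V)"

(* mu_n(A) = Pr[G(V,p) \<in> A], V finite with |V| = n *)
definition mu :: "real \<Rightarrow> nat \<Rightarrow> 'v set \<Rightarrow> 'v set set set \<Rightarrow> real" where
  "mu p r V A = (\<Sum>G\<in>A \<inter> hyps r V. p ^ card G * (1 - p) ^ (card (rsets r V) - card G))"

definition wf_family :: "nat \<Rightarrow> (nat set \<times> nat set set) set \<Rightarrow> bool" where
  "wf_family r F = (\<forall>(W, E)\<in>F. finite W \<and> E \<subseteq> rsets r W)"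

(* F < G[D]: the induced subhypergraph of G on D contains an induced copy of a member of F *)
definition contains_induced ::
  "nat \<Rightarrow> (nat set \<times> nat set set) set \<Rightarrow> 'v set \<Rightarrow> 'v set set \<Rightarrow> bool" where
  "contains_induced r F D G =
     (\<exists>(W, E)\<in>F. \<exists>f. inj_on f W \<and> f ` W \<subseteq> D \<and>
        (\<forall>S. S \<subseteq> W \<and> card S = r \<longrightarrow> (S \<in> E \<longleftrightarrow> f ` S \<in> {e\<in>G. e \<subseteq> D})))"

(* c(p,F): Pr[G(n,p) is F-free] = 2^((-c+o(1)) binom n r) *)
definition cconst :: "real \<Rightarrow> nat \<Rightarrow> (nat set \<times> nat set set) set \<Rightarrow> real" where
  "cconst p r F = lim (\<lambda>n. - log 2 (mu p r {..<n}
       {G \<in> hyps r {..<n}. \<not> contains_induced r F {..<n} G}) / real (n choose r))"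

definition partial_steiner :: "nat \<Rightarrow> nat \<Rightarrow> 'v set \<Rightarrow> 'v set set \<Rightarrow> bool" where
  "partial_steiner r m V \<D> =
     ((\<forall>D\<in>\<D>. D \<subseteq> V \<and> card D = m) \<and>
      (\<forall>S\<in>rsets r V. card {D\<in>\<D>. S \<subseteq> D} \<le> 1))"

end

theory Submission
  imports Defs "HOL-Analysis.Analysis"
begin


definition wt :: "real \<Rightarrow> 'a set \<Rightarrow> 'a set \<Rightarrow> real" where
  "wt p X G = p ^ card G * (1-p) ^ (card X - card G)"
definition ex :: "real \<Rightarrow> 'a set \<Rightarrow> ('a set \<Rightarrow> real) \<Rightarrow> real" where
  "ex p X h = (\<Sum>G\<in>Pow X. wt p X G * h G)"

lemma wt_insert1:
  assumes "finite X" "x \<notin> X" "G \<subseteq> X"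
  shows "wt p (insert x X) G = (1-p) * wt p X G"
proof -
  have "card G \<le> card X" using assms by (simp add: card_mono)
  then have "card (insert x X) - card G = Suc (card X - card G)" using assms by simp
  then show ?thesis unfolding wt_def by simp
qed

lemma wt_insert2:
  assumes "finite X" "x \<notin> X" "G \<subseteq> X"
  shows "wt p (insert x X) (insert x G) = p * wt p X G"
proof -
  have fG: "finite G" using assms finite_subset by blast
  have "x \<notin> G" using assms by blast
  then show ?thesis unfolding wt_def using assms fG by simp
qed

lemma ex_insert:
  assumes "finite X" "x \<notin> X"
  shows "ex p (insert x X) h = (\<Sum>G\<in>Pow X. wt p X G * ((1-p) * h G + p * h (insert x G)))"
proof -
  have d: "Pow X \<inter> insert x ` Pow X = {}" using assms by auto
  have inj: "inj_on (insert x) (Pow X)"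
  proof (rule inj_onI)
    fix a b assume "a \<in> Pow X" "b \<in> Pow X" "insert x a = insert x b"
    then show "a = b" using assms by (metis PowD insert_ident subsetD)
  qed
  have "ex p (insert x X) h = (\<Sum>G\<in>Pow X. wt p (insert x X) G * h G) + (\<Sum>G\<in>insert x ` Pow X. wt p (insert x X) G * h G)"
    unfolding ex_def Pow_insert using d assms by (simp add: sum.union_disjoint)
  also have "(\<Sum>G\<in>insert x ` Pow X. wt p (insert x X) G * h G) = (\<Sum>G\<in>Pow X. wt p (insert x X) (insert x G) * h (insert x G))"
    using inj by (simp add: sum.reindex)
  also have "\<dots> = (\<Sum>G\<in>Pow X. p * wt p X G * h (insert x G))"
    using assms by (intro sum.cong) (auto simp: wt_insert2)
  also have "(\<Sum>G\<in>Pow X. wt p (insert x X) G * h G) = (\<Sum>G\<in>Pow X. (1-p) * wt p X G * h G)"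
    using assms by (intro sum.cong) (auto simp: wt_insert1)
  finally have "ex p (insert x X) h = (\<Sum>G\<in>Pow X. (1-p) * wt p X G * h G) + (\<Sum>G\<in>Pow X. p * wt p X G * h (insert x G))" .
  then show ?thesis by (simp add: sum.distrib[symmetric] algebra_simps)
qed

lemma ex_empty: "ex p {} h = h {}"
  unfolding ex_def wt_def by simp

lemma ex_mono:
  assumes "finite X" "0 \<le> p" "p \<le> 1" "\<And>G. G \<subseteq> X \<Longrightarrow> h G \<le> g G"
  shows "ex p X h \<le> ex p X g"
  unfolding ex_def using assms by (intro sum_mono mult_left_mono) (auto simp: wt_def)

lemma wt_nonneg: "0 \<le> p \<Longrightarrow> p \<le> 1 \<Longrightarrow> 0 \<le> wt p X G"
  by (simp add: wt_def)

lemma wt_pos: "0 < p \<Longrightarrow> p < 1 \<Longrightarrow> 0 < wt p X G"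
  by (simp add: wt_def)

lemma ex_const: "finite X \<Longrightarrow> ex p X (\<lambda>_. c) = c"
proof (induction X rule: finite_induct)
  case empty then show ?case by (simp add: ex_empty)
next
  case (insert x X)
  have "ex p (insert x X) (\<lambda>_. c) = (\<Sum>G\<in>Pow X. wt p X G * c)"
    using insert by (simp add: ex_insert algebra_simps)
  also have "\<dots> = ex p X (\<lambda>_. c)" by (simp add: ex_def)
  finally show ?case using insert by simp
qed

lemma ex_cmult: "ex p X (\<lambda>G. c * h G) = c * ex p X h"
  unfolding ex_def by (simp add: sum_distrib_left algebra_simps)

lemma ex_add: "ex p X (\<lambda>G. h G + g G) = ex p X h + ex p X g"
  unfolding ex_def by (simp add: sum.distrib algebra_simps)

lemma excong: "(\<And>G. G \<subseteq> X \<Longrightarrow> h G = g G) \<Longrightarrow> ex p X h = ex p X g"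
  unfolding ex_def by (intro sum.cong) auto



lemma ex_marg_aux:
  assumes "finite Z" "finite Y" "Z \<inter> Y = {}"
  shows "ex p (Z \<union> Y) (\<lambda>G. h (G \<inter> Y)) = ex p Y h"
  using assms
proof (induction Z rule: finite_induct)
  case empty
  have "ex p Y (\<lambda>G. h (G \<inter> Y)) = ex p Y h"
    by (intro excong) (auto simp: Int_absorb2)
  then show ?case by simp
next
  case (insert x Z)
  have "ex p (insert x Z \<union> Y) (\<lambda>G. h (G \<inter> Y)) = ex p (insert x (Z \<union> Y)) (\<lambda>G. h (G \<inter> Y))" by simp
  also have "\<dots> = (\<Sum>G\<in>Pow (Z \<union> Y). wt p (Z \<union> Y) G * ((1-p) * h (G \<inter> Y) + p * h (insert x G \<inter> Y)))"
    using insert by (intro ex_insert) auto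
  also have "\<dots> = (\<Sum>G\<in>Pow (Z \<union> Y). wt p (Z \<union> Y) G * h (G \<inter> Y))"
    using insert by (intro sum.cong) (auto simp: algebra_simps)
  also have "\<dots> = ex p Y h" using insert by (simp add: ex_def)
  finally show ?case .
qed

lemma ex_marg:
  assumes "finite X" "Y \<subseteq> X"
  shows "ex p X (\<lambda>G. h (G \<inter> Y)) = ex p Y h"
proof -
  have "X = (X - Y) \<union> Y" using assms by auto
  then show ?thesis using ex_marg_aux[of "X - Y" Y p h] assms finite_subset by (metis Diff_disjoint Int_commute finite_Diff)
qed

lemma ex_prod2_aux:
  assumes "finite Z" "finite Y" "Y \<inter> Z = {}"
  shows "ex p (Y \<union> Z) (\<lambda>G. f (G \<inter> Y) * g (G \<inter> Z)) = ex p Y f * ex p Z g"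
  using assms
proof (induction Z arbitrary: g rule: finite_induct)
  case empty
  have "ex p Y (\<lambda>G. f (G \<inter> Y) * g {}) = ex p Y (\<lambda>G. g {} * f G)"
    by (intro excong) (auto simp: Int_absorb2)
  then show ?case by (simp add: ex_cmult ex_empty)
next
  case (insert x Z)
  define g' where "g' K = (1-p) * g K + p * g (insert x K)" for K
  have "ex p (Y \<union> insert x Z) (\<lambda>G. f (G \<inter> Y) * g (G \<inter> insert x Z)) = ex p (insert x (Y \<union> Z)) (\<lambda>G. f (G \<inter> Y) * g (G \<inter> insert x Z))" by simp
  also have "\<dots> = (\<Sum>G\<in>Pow (Y \<union> Z). wt p (Y \<union> Z) G * ((1-p) * (f (G \<inter> Y) * g (G \<inter> insert x Z)) + p * (f (insert x G \<inter> Y) * g (insert x G \<inter> insert x Z))))"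
    using insert by (intro ex_insert) auto
  also have "\<dots> = (\<Sum>G\<in>Pow (Y \<union> Z). wt p (Y \<union> Z) G * (f (G \<inter> Y) * g' (G \<inter> Z)))"
  proof (intro sum.cong refl)
    fix G assume G: "G \<in> Pow (Y \<union> Z)"
    then have "x \<notin> G" using insert by auto
    then have e1: "G \<inter> insert x Z = G \<inter> Z" by auto
    have e2: "insert x G \<inter> Y = G \<inter> Y" using insert by auto
    have e3: "insert x G \<inter> insert x Z = insert x (G \<inter> Z)" by auto
    show "wt p (Y \<union> Z) G * ((1-p) * (f (G \<inter> Y) * g (G \<inter> insert x Z)) + p * (f (insert x G \<inter> Y) * g (insert x G \<inter> insert x Z))) = wt p (Y \<union> Z) G * (f (G \<inter> Y) * g' (G \<inter> Z))"
      unfolding e1 e2 e3 g'_def by (simp add: algebra_simps)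
  qed
  also have "\<dots> = ex p Y f * ex p Z g'"
    using insert.IH[of g'] insert.prems by (simp add: ex_def)
  also have "ex p Z g' = ex p (insert x Z) g"
    using ex_insert[of Z x p g] insert(1,2) unfolding g'_def ex_def by simp
  finally show ?case .
qed

lemma ex_prod2:
  assumes "finite X" "Y \<subseteq> X" "Z \<subseteq> X" "Y \<inter> Z = {}"
  shows "ex p X (\<lambda>G. f (G \<inter> Y) * g (G \<inter> Z)) = ex p Y f * ex p Z g"
proof -
  have "ex p X (\<lambda>G. f (G \<inter> Y) * g (G \<inter> Z)) = ex p X (\<lambda>G. (\<lambda>K. f (K \<inter> Y) * g (K \<inter> Z)) (G \<inter> (Y \<union> Z)))"
    by (intro excong) (simp add: Int_assoc Int_absorb2 inf_sup_absorb)
  also have "\<dots> = ex p (Y \<union> Z) (\<lambda>K. f (K \<inter> Y) * g (K \<inter> Z))"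
    using assms by (intro ex_marg) auto
  also have "\<dots> = ex p Y f * ex p Z g"
    using assms finite_subset by (intro ex_prod2_aux) auto
  finally show ?thesis .
qed

lemma ex_prod:
  assumes "finite I" "finite X" "\<And>i. i \<in> I \<Longrightarrow> S i \<subseteq> X"
    "\<And>i j. i \<in> I \<Longrightarrow> j \<in> I \<Longrightarrow> i \<noteq> j \<Longrightarrow> S i \<inter> S j = {}"
  shows "ex p X (\<lambda>G. \<Prod>i\<in>I. h i (G \<inter> S i)) = (\<Prod>i\<in>I. ex p (S i) (h i))"
  using assms
proof (induction I arbitrary: X rule: finite_induct)
  case empty
  then show ?case by (simp add: ex_const)
next
  case (insert j I)
  define Z where "Z = (\<Union>i\<in>I. S i)"
  have Zsub: "Z \<subseteq> X" using insert unfolding Z_def by auto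
  have disj: "S j \<inter> Z = {}" using insert unfolding Z_def by fastforce
  have "ex p X (\<lambda>G. \<Prod>i\<in>insert j I. h i (G \<inter> S i)) = ex p X (\<lambda>G. h j (G \<inter> S j) * (\<lambda>K. \<Prod>i\<in>I. h i (K \<inter> S i)) (G \<inter> Z))"
  proof (intro excong)
    fix G assume "G \<subseteq> X"
    have "\<forall>i\<in>I. G \<inter> S i = G \<inter> Z \<inter> S i" unfolding Z_def by blast
    then have "(\<Prod>i\<in>I. h i (G \<inter> S i)) = (\<Prod>i\<in>I. h i (G \<inter> Z \<inter> S i))"
      by (intro prod.cong refl) auto
    then show "(\<Prod>i\<in>insert j I. h i (G \<inter> S i)) = h j (G \<inter> S j) * (\<lambda>K. \<Prod>i\<in>I. h i (K \<inter> S i)) (G \<inter> Z)"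
      using insert by simp
  qed
  also have "\<dots> = ex p (S j) (h j) * ex p Z (\<lambda>K. \<Prod>i\<in>I. h i (K \<inter> S i))"
    using insert Zsub disj by (intro ex_prod2) auto
  also have "ex p Z (\<lambda>K. \<Prod>i\<in>I. h i (K \<inter> S i)) = (\<Prod>i\<in>I. ex p (S i) (h i))"
  proof (rule insert.IH)
    show "finite Z" using Zsub insert.prems(1) finite_subset by blast
  qed (use insert.prems in \<open>auto simp: Z_def\<close>)
  finally show ?case using insert by simp
qed



lemma amgm_k:
  fixes t :: "'a \<Rightarrow> real"
  assumes "finite J" "card J = k" "k > 0" "\<And>j. j \<in> J \<Longrightarrow> 0 \<le> t j"
  shows "(\<Prod>j\<in>J. t j) \<le> (\<Sum>j\<in>J. t j ^ k) / k"
proof -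
  have ne: "J \<noteq> {}" using assms by auto
  have "(\<Prod>j\<in>J. t j ^ k) powr (1 / card J) \<le> (\<Sum>j\<in>J. t j ^ k / card J)"
    using arith_geom_mean[OF assms(1) ne, of "\<lambda>j. t j ^ k"] assms(4) by simp
  moreover have "(\<Prod>j\<in>J. t j ^ k) = (\<Prod>j\<in>J. t j) ^ k" by (simp add: prod_power_distrib)
  moreover have P: "0 \<le> (\<Prod>j\<in>J. t j)" using assms(4) by (simp add: prod_nonneg)
  moreover have "((\<Prod>j\<in>J. t j) ^ k) powr (1 / k) = (\<Prod>j\<in>J. t j)"
    using P assms(3) by (simp add: root_powr_inverse[symmetric] real_root_power_cancel)
  ultimately show ?thesis using assms(2) by (simp add: sum_divide_distrib)
qed

lemma holder_k:
  fixes u v :: "'a \<Rightarrow> real"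
  assumes "finite J" "card J = k" "k > 0" "0 \<le> a" "0 \<le> b"
    "\<And>j. j \<in> J \<Longrightarrow> 0 \<le> u j" "\<And>j. j \<in> J \<Longrightarrow> 0 \<le> v j"
  shows "a * (\<Prod>j\<in>J. u j) + b * (\<Prod>j\<in>J. v j) \<le> (\<Prod>j\<in>J. root k (a * u j ^ k + b * v j ^ k))"
proof -
  define s where "s j = root k (a * u j ^ k + b * v j ^ k)" for j
  have s0: "0 \<le> s j" if "j \<in> J" for j
    unfolding s_def using assms that by (intro real_root_ge_zero) auto
  have sk: "s j ^ k = a * u j ^ k + b * v j ^ k" if "j \<in> J" for j
    unfolding s_def using assms that by simp
  show ?thesis
  proof (cases "\<exists>j\<in>J. s j = 0")
    case True
    then obtain j where j: "j \<in> J" "s j = 0" by blast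
    then have "a * u j ^ k + b * v j ^ k = 0" using sk by (metis assms(3) zero_power gr_implies_not0)
    moreover have "0 \<le> a * u j ^ k" "0 \<le> b * v j ^ k" using assms j by auto
    ultimately have "a * u j ^ k = 0" "b * v j ^ k = 0" by linarith+
    then have au: "a * u j = 0" and bv: "b * v j = 0" using assms(3) by auto
    have "a * (\<Prod>j\<in>J. u j) = a * u j * (\<Prod>i\<in>J-{j}. u i)"
      using j assms(1) by (simp add: prod.remove)
    moreover have "b * (\<Prod>j\<in>J. v j) = b * v j * (\<Prod>i\<in>J-{j}. v i)"
      using j assms(1) by (simp add: prod.remove)
    ultimately have "a * (\<Prod>j\<in>J. u j) + b * (\<Prod>j\<in>J. v j) = 0" using au bv by (metis add.right_neutral mult_zero_left)
    moreover have "0 \<le> (\<Prod>j\<in>J. s j)" using s0 by (simp add: prod_nonneg)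
    ultimately show ?thesis unfolding s_def by simp
  next
    case False
    then have spos: "0 < s j" if "j \<in> J" for j using s0[OF that] that by force
    have Spos: "0 < (\<Prod>j\<in>J. s j)" using spos by (simp add: prod_pos)
    have A: "(\<Prod>j\<in>J. u j / s j) \<le> (\<Sum>j\<in>J. (u j / s j) ^ k) / k"
      using assms spos by (intro amgm_k) (auto intro!: divide_nonneg_pos)
    have B: "(\<Prod>j\<in>J. v j / s j) \<le> (\<Sum>j\<in>J. (v j / s j) ^ k) / k"
      using assms spos by (intro amgm_k) (auto intro!: divide_nonneg_pos)
    have "a * (\<Prod>j\<in>J. u j / s j) + b * (\<Prod>j\<in>J. v j / s j) \<le>
          a * ((\<Sum>j\<in>J. (u j / s j) ^ k) / k) + b * ((\<Sum>j\<in>J. (v j / s j) ^ k) / k)"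
      using A B assms(4,5) by (intro add_mono mult_left_mono) auto
    also have "\<dots> = (\<Sum>j\<in>J. (a * u j ^ k + b * v j ^ k) / s j ^ k) / k"
      by (simp add: sum_divide_distrib sum_distrib_left sum.distrib[symmetric] power_divide add_divide_distrib)
    also have "\<dots> = (\<Sum>j\<in>J. 1) / k"
      using sk spos by (intro arg_cong[where f="\<lambda>x. x / k"] sum.cong refl) (metis div_self less_numeral_extra(3) power_not_zero)
    also have "\<dots> = 1" using assms(2,3) by simp
    finally have "(a * (\<Prod>j\<in>J. u j) + b * (\<Prod>j\<in>J. v j)) / (\<Prod>j\<in>J. s j) \<le> 1"
      by (simp add: prod_dividef add_divide_distrib)
    then show ?thesis using Spos unfolding s_def by (simp add: divide_le_eq)
  qed
qed



lemma finner:
  assumes "finite X" "finite I" "0 \<le> p" "p \<le> 1" "k > 0"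
    "\<And>i. i \<in> I \<Longrightarrow> S i \<subseteq> X"
    "\<And>x. x \<in> X \<Longrightarrow> card {i\<in>I. x \<in> S i} = k"
    "\<And>i H. i \<in> I \<Longrightarrow> 0 \<le> f i H"
  shows "ex p X (\<lambda>G. \<Prod>i\<in>I. f i (G \<inter> S i)) \<le> (\<Prod>i\<in>I. root k (ex p (S i) (\<lambda>H. f i H ^ k)))"
  using assms(1,6,7,8)
proof (induction X arbitrary: S f rule: finite_induct)
  case empty
  then have Se: "\<And>i. i \<in> I \<Longrightarrow> S i = {}" by blast
  have "(\<Prod>i\<in>I. root k (ex p (S i) (\<lambda>H. f i H ^ k))) = (\<Prod>i\<in>I. f i {})"
    using Se empty.prems(3) assms(5) by (intro prod.cong refl) (simp add: ex_empty real_root_power_cancel)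
  then show ?case by (simp add: ex_empty)
next
  case (insert x X)
  define J where "J = {i\<in>I. x \<in> S i}"
  have JI: "J \<subseteq> I" and fJ: "finite J" using assms(2) unfolding J_def by auto
  have cJ: "card J = k" unfolding J_def using insert.prems(2) by simp
  define S' where "S' i = S i - {x}" for i
  define f' where "f' i H = (if i \<in> J then root k ((1-p) * f i H ^ k + p * f i (insert x H) ^ k) else f i H)" for i H
  have f'0: "0 \<le> f' i H" if "i \<in> I" for i H
    unfolding f'_def using insert.prems(3)[OF that] assms(3,4) by (auto intro!: real_root_ge_zero)
  have "ex p (insert x X) (\<lambda>G. \<Prod>i\<in>I. f i (G \<inter> S i)) =
     (\<Sum>G\<in>Pow X. wt p X G * ((1-p) * (\<Prod>i\<in>I. f i (G \<inter> S i)) + p * (\<Prod>i\<in>I. f i (insert x G \<inter> S i))))"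
    using insert by (simp add: ex_insert)
  also have "\<dots> \<le> (\<Sum>G\<in>Pow X. wt p X G * (\<Prod>i\<in>I. f' i (G \<inter> S' i)))"
  proof (intro sum_mono mult_left_mono)
    fix G assume "G \<in> Pow X"
    then have xG: "x \<notin> G" using insert by auto
    have e1: "G \<inter> S i = G \<inter> S' i" for i unfolding S'_def using xG by auto
    have e2: "insert x G \<inter> S i = insert x (G \<inter> S' i)" if "i \<in> J" for i
      using that unfolding S'_def J_def by auto
    have e3: "insert x G \<inter> S i = G \<inter> S' i" if "i \<in> I - J" for i
      using that xG unfolding S'_def J_def by auto
    define C where "C = (\<Prod>i\<in>I-J. f i (G \<inter> S' i))"
    have C0: "0 \<le> C" unfolding C_def using insert.prems(3) by (auto intro!: prod_nonneg)
    have P1: "(\<Prod>i\<in>I. f i (G \<inter> S i)) = C * (\<Prod>i\<in>J. f i (G \<inter> S' i))"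
      unfolding C_def e1 using prod.subset_diff[OF JI assms(2)] by simp
    have P2: "(\<Prod>i\<in>I. f i (insert x G \<inter> S i)) = C * (\<Prod>i\<in>J. f i (insert x (G \<inter> S' i)))"
    proof -
      have "(\<Prod>i\<in>I. f i (insert x G \<inter> S i)) = (\<Prod>i\<in>I-J. f i (insert x G \<inter> S i)) * (\<Prod>i\<in>J. f i (insert x G \<inter> S i))"
        using prod.subset_diff[OF JI assms(2)] by simp
      also have "(\<Prod>i\<in>I-J. f i (insert x G \<inter> S i)) = C" unfolding C_def using e3 by (intro prod.cong) auto
      also have "(\<Prod>i\<in>J. f i (insert x G \<inter> S i)) = (\<Prod>i\<in>J. f i (insert x (G \<inter> S' i)))" using e2 by (intro prod.cong) auto
      finally show ?thesis .
    qed
    have P3: "(\<Prod>i\<in>I. f' i (G \<inter> S' i)) = C * (\<Prod>i\<in>J. root k ((1-p) * f i (G \<inter> S' i) ^ k + p * f i (insert x (G \<inter> S' i)) ^ k))"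
    proof -
      have "(\<Prod>i\<in>I. f' i (G \<inter> S' i)) = (\<Prod>i\<in>I-J. f' i (G \<inter> S' i)) * (\<Prod>i\<in>J. f' i (G \<inter> S' i))"
        using prod.subset_diff[OF JI assms(2)] by simp
      also have "(\<Prod>i\<in>I-J. f' i (G \<inter> S' i)) = C" unfolding C_def f'_def by (intro prod.cong) auto
      also have "(\<Prod>i\<in>J. f' i (G \<inter> S' i)) = (\<Prod>i\<in>J. root k ((1-p) * f i (G \<inter> S' i) ^ k + p * f i (insert x (G \<inter> S' i)) ^ k))"
        unfolding f'_def by (intro prod.cong) auto
      finally show ?thesis .
    qed
    have H: "(1-p) * (\<Prod>i\<in>J. f i (G \<inter> S' i)) + p * (\<Prod>i\<in>J. f i (insert x (G \<inter> S' i))) \<le>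
      (\<Prod>i\<in>J. root k ((1-p) * f i (G \<inter> S' i) ^ k + p * f i (insert x (G \<inter> S' i)) ^ k))"
      using fJ cJ assms(3,4,5) insert.prems(3) JI by (intro holder_k) auto
    show "(1-p) * (\<Prod>i\<in>I. f i (G \<inter> S i)) + p * (\<Prod>i\<in>I. f i (insert x G \<inter> S i)) \<le> (\<Prod>i\<in>I. f' i (G \<inter> S' i))"
      unfolding P1 P2 P3 using mult_left_mono[OF H C0] by (simp add: algebra_simps)
  next
    fix G show "0 \<le> wt p X G" using assms(3,4) by (rule wt_nonneg)
  qed
  also have "\<dots> = ex p X (\<lambda>G. \<Prod>i\<in>I. f' i (G \<inter> S' i))" by (simp add: ex_def)
  also have "\<dots> \<le> (\<Prod>i\<in>I. root k (ex p (S' i) (\<lambda>H. f' i H ^ k)))"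
  proof (rule insert.IH)
    show "S' i \<subseteq> X" if "i \<in> I" for i using insert.prems(1)[OF that] unfolding S'_def by auto
    show "card {i\<in>I. y \<in> S' i} = k" if "y \<in> X" for y
    proof -
      have "{i\<in>I. y \<in> S' i} = {i\<in>I. y \<in> S i}" unfolding S'_def using that insert by auto
      then show ?thesis using insert.prems(2) that by simp
    qed
    show "0 \<le> f' i H" if "i \<in> I" for i H using f'0 that by simp
  qed
  also have "\<dots> = (\<Prod>i\<in>I. root k (ex p (S i) (\<lambda>H. f i H ^ k)))"
  proof (intro prod.cong refl)
    fix i assume iI: "i \<in> I"
    show "root k (ex p (S' i) (\<lambda>H. f' i H ^ k)) = root k (ex p (S i) (\<lambda>H. f i H ^ k))"
    proof (cases "i \<in> J")
      case True
      have Si: "S i = insert x (S' i)" using True unfolding J_def S'_def by auto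
      have fin: "finite (S' i)" using insert.prems(1)[OF iI] insert.hyps(1) unfolding S'_def
        by (meson finite_Diff finite_insert finite_subset)
      have "ex p (S' i) (\<lambda>H. f' i H ^ k) = ex p (S' i) (\<lambda>H. (1-p) * f i H ^ k + p * f i (insert x H) ^ k)"
        unfolding f'_def using True assms(3,4,5) insert.prems(3)[OF iI] by (intro excong) simp
      also have "\<dots> = ex p (S i) (\<lambda>H. f i H ^ k)"
        unfolding Si using ex_insert[OF fin, of x p "\<lambda>H. f i H ^ k"] by (simp add: S'_def ex_def)
      finally show ?thesis by simp
    next
      case False
      then have "S' i = S i" unfolding J_def S'_def using iI by auto
      then show ?thesis using False unfolding f'_def by simp
    qed
  qed
  finally show ?case .
qed



lemma finite_rsets: "finite V \<Longrightarrow> finite (rsets r V)"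
  unfolding rsets_def by simp

lemma card_rsets: "finite V \<Longrightarrow> card (rsets r V) = card V choose r"
  unfolding rsets_def by (simp add: n_subsets)

lemma mu_ex:
  assumes "finite V"
  shows "mu p r V A = ex p (rsets r V) (\<lambda>G. if G \<in> A then 1 else 0)"
proof -
  have "mu p r V A = (\<Sum>G\<in>Pow (rsets r V) \<inter> A. wt p (rsets r V) G)"
    unfolding mu_def hyps_def wt_def by (simp add: Int_commute)
  also have "\<dots> = ex p (rsets r V) (\<lambda>G. if G \<in> A then 1 else 0)"
    unfolding ex_def using assms finite_rsets
    by (subst sum.inter_restrict) (auto intro!: sum.cong)
  finally show ?thesis .
qed

lemma ex_reindex:
  assumes "inj_on g Y" "finite Y"
  shows "ex p (g ` Y) h = ex p Y (\<lambda>H. h (g ` H))"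
proof -
  have P: "Pow (g ` Y) = image g ` Pow Y" by (simp add: image_Pow_surj)
  have inj: "inj_on (image g) (Pow Y)" by (rule inj_on_image_Pow[OF assms(1)])
  have "ex p (g ` Y) h = (\<Sum>H\<in>Pow Y. wt p (g ` Y) (g ` H) * h (g ` H))"
    unfolding ex_def P using inj by (simp add: sum.reindex)
  also have "\<dots> = ex p Y (\<lambda>H. h (g ` H))"
    unfolding ex_def
  proof (intro sum.cong refl)
    fix H assume "H \<in> Pow Y"
    then have "card (g ` H) = card H" using assms by (meson PowD card_image inj_on_subset)
    moreover have "card (g ` Y) = card Y" using assms card_image by blast
    ultimately show "wt p (g ` Y) (g ` H) * h (g ` H) = wt p Y H * h (g ` H)" unfolding wt_def by simp
  qed
  finally show ?thesis .
qed

lemma ci_D: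
  assumes "contains_induced r F D G"
  obtains W E f where "(W, E) \<in> F" "inj_on f W" "f ` W \<subseteq> D"
    "\<forall>S. S \<subseteq> W \<and> card S = r \<longrightarrow> (S \<in> E \<longleftrightarrow> f ` S \<in> {e\<in>G. e \<subseteq> D})"
  using assms unfolding contains_induced_def by (auto simp: Bex_def)
lemma ci_I:
  assumes "(W, E) \<in> F" "inj_on f W" "f ` W \<subseteq> D"
    "\<forall>S. S \<subseteq> W \<and> card S = r \<longrightarrow> (S \<in> E \<longleftrightarrow> f ` S \<in> {e\<in>G. e \<subseteq> D})"
  shows "contains_induced r F D G"
  unfolding contains_induced_def using assms by (auto simp: Bex_def)

lemma ci_local_dir:
  assumes "contains_induced r F D G" "G \<inter> rsets r D \<subseteq> G'" "G' \<inter> rsets r D \<subseteq> G"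
  shows "contains_induced r F D G'"
proof -
  obtain W E f where WE: "(W, E) \<in> F" "inj_on f W" "f ` W \<subseteq> D"
    "\<forall>S. S \<subseteq> W \<and> card S = r \<longrightarrow> (S \<in> E \<longleftrightarrow> f ` S \<in> {e\<in>G. e \<subseteq> D})"
    by (rule ci_D[OF assms(1)])
  have "\<forall>S. S \<subseteq> W \<and> card S = r \<longrightarrow> (S \<in> E \<longleftrightarrow> f ` S \<in> {e\<in>G'. e \<subseteq> D})"
  proof (intro allI impI)
    fix S assume S: "S \<subseteq> W \<and> card S = r"
    then have c: "card (f ` S) = r" using WE by (metis card_image inj_on_subset)
    have sD: "f ` S \<subseteq> D" using S WE by blast
    then have "f ` S \<in> rsets r D" using c unfolding rsets_def by simp
    then have "(f ` S \<in> G) = (f ` S \<in> G')" using assms(2,3) by blast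
    then show "(S \<in> E \<longleftrightarrow> f ` S \<in> {e\<in>G'. e \<subseteq> D})" using WE(4) S sD by auto
  qed
  then show ?thesis by (intro ci_I[OF WE(1,2,3)])
qed

lemma ci_local:
  "contains_induced r F D G = contains_induced r F D (G \<inter> rsets r D)"
  using ci_local_dir[of r F D G "G \<inter> rsets r D"] ci_local_dir[of r F D "G \<inter> rsets r D" G] by blast

lemma ci_mono:
  assumes "contains_induced r F D' G" "D' \<subseteq> D"
  shows "contains_induced r F D G"
proof -
  obtain W E f where WE: "(W, E) \<in> F" "inj_on f W" "f ` W \<subseteq> D'"
    "\<forall>S. S \<subseteq> W \<and> card S = r \<longrightarrow> (S \<in> E \<longleftrightarrow> f ` S \<in> {e\<in>G. e \<subseteq> D'})"
    by (rule ci_D[OF assms(1)])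
  have "\<forall>S. S \<subseteq> W \<and> card S = r \<longrightarrow> (S \<in> E \<longleftrightarrow> f ` S \<in> {e\<in>G. e \<subseteq> D})"
  proof (intro allI impI)
    fix S assume S: "S \<subseteq> W \<and> card S = r"
    then have "f ` S \<subseteq> D'" using WE by blast
    then show "(S \<in> E \<longleftrightarrow> f ` S \<in> {e\<in>G. e \<subseteq> D})" using WE(4) S assms(2) by auto
  qed
  moreover have "f ` W \<subseteq> D" using WE(3) assms(2) by blast
  ultimately show ?thesis by (intro ci_I[OF WE(1,2)])
qed

lemma ci_transport:
  assumes "inj_on \<phi> D" "H \<subseteq> Pow D" "contains_induced r F D H"
  shows "contains_induced r F (\<phi> ` D) (image \<phi> ` H)"
proof -
  obtain W E f where WE: "(W, E) \<in> F" "inj_on f W" "f ` W \<subseteq> D"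
    "\<forall>S. S \<subseteq> W \<and> card S = r \<longrightarrow> (S \<in> E \<longleftrightarrow> f ` S \<in> {e\<in>H. e \<subseteq> D})"
    by (rule ci_D[OF assms(3)])
  have inj: "inj_on (\<phi> \<circ> f) W" using WE assms(1) by (simp add: comp_inj_on inj_on_subset)
  have sub: "(\<phi> \<circ> f) ` W \<subseteq> \<phi> ` D" using WE(3) by auto
  have "\<forall>S. S \<subseteq> W \<and> card S = r \<longrightarrow> (S \<in> E \<longleftrightarrow> (\<phi> \<circ> f) ` S \<in> {e\<in>image \<phi> ` H. e \<subseteq> \<phi> ` D})"
  proof (intro allI impI)
    fix S assume S: "S \<subseteq> W \<and> card S = r"
    have fS: "f ` S \<subseteq> D" using S WE(3) by blast
    have h1: "(f ` S \<in> H) = (\<phi> ` (f ` S) \<in> image \<phi> ` H)"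
    proof
      assume "\<phi> ` f ` S \<in> image \<phi> ` H"
      then obtain e where e: "e \<in> H" "\<phi> ` f ` S = \<phi> ` e" by blast
      then have "e \<subseteq> D" using assms(2) by auto
      then have "f ` S = e" using e fS assms(1) by (simp add: inj_on_image_eq_iff)
      then show "f ` S \<in> H" using e by simp
    qed auto
    have h2: "\<phi> ` (f ` S) \<subseteq> \<phi> ` D" using fS by blast
    show "(S \<in> E \<longleftrightarrow> (\<phi> \<circ> f) ` S \<in> {e\<in>image \<phi> ` H. e \<subseteq> \<phi> ` D})"
    proof -
      have "(S \<in> E) = (f ` S \<in> H)" using WE(4) S fS by auto
      then show ?thesis using h1 h2 by (simp add: image_comp)
    qed
  qed
  then show ?thesis by (intro ci_I[OF WE(1) inj sub])
qed

lemma rsets_image: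
  assumes "inj_on \<phi> D"
  shows "rsets r (\<phi> ` D) = image \<phi> ` rsets r D"
proof
  show "image \<phi> ` rsets r D \<subseteq> rsets r (\<phi> ` D)"
    unfolding rsets_def using assms by (auto simp: card_image inj_on_subset)
  show "rsets r (\<phi> ` D) \<subseteq> image \<phi> ` rsets r D"
  proof
    fix e assume "e \<in> rsets r (\<phi> ` D)"
    then have e: "e \<subseteq> \<phi> ` D" "card e = r" unfolding rsets_def by auto
    then obtain A where A: "A \<subseteq> D" "e = \<phi> ` A" by (meson subset_imageE)
    then have "card A = r" using e assms by (metis card_image inj_on_subset)
    then show "e \<in> image \<phi> ` rsets r D" using A unfolding rsets_def by auto
  qed
qed

definition Qf :: "real \<Rightarrow> nat \<Rightarrow> (nat set \<times> nat set set) set \<Rightarrow> 'v set \<Rightarrow> real" where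
  "Qf p r F D = ex p (rsets r D) (\<lambda>H. if contains_induced r F D H then 0 else 1)"

lemma Qf_transport:
  assumes "inj_on \<phi> D" "finite D"
  shows "Qf p r F (\<phi> ` D) = Qf p r F D"
proof -
  have injr: "inj_on (image \<phi>) (rsets r D)"
    by (rule inj_on_subset[OF inj_on_image_Pow[OF assms(1)]]) (auto simp: rsets_def)
  have "Qf p r F (\<phi> ` D) = ex p (image \<phi> ` rsets r D) (\<lambda>H. if contains_induced r F (\<phi> ` D) H then 0 else 1)"
    unfolding Qf_def rsets_image[OF assms(1)] ..
  also have "\<dots> = ex p (rsets r D) (\<lambda>H. if contains_induced r F (\<phi> ` D) (image \<phi> ` H) then 0 else 1)"
    using ex_reindex[OF injr finite_rsets[OF assms(2)]] by simp
  also have "\<dots> = Qf p r F D" unfolding Qf_def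
  proof (intro excong)
    fix H assume H: "H \<subseteq> rsets r D"
    then have HP: "H \<subseteq> Pow D" unfolding rsets_def by auto
    define \<psi> where "\<psi> = inv_into D \<phi>"
    have "contains_induced r F (\<phi> ` D) (image \<phi> ` H) = contains_induced r F D H"
    proof
      assume "contains_induced r F D H" then show "contains_induced r F (\<phi> ` D) (image \<phi> ` H)"
        using ci_transport[OF assms(1) HP] by blast
    next
      assume a: "contains_induced r F (\<phi> ` D) (image \<phi> ` H)"
      have i2: "inj_on \<psi> (\<phi> ` D)" unfolding \<psi>_def by (simp add: inj_on_inv_into)
      have h2: "image \<phi> ` H \<subseteq> Pow (\<phi> ` D)" using HP by auto
      have "contains_induced r F (\<psi> ` \<phi> ` D) (image \<psi> ` image \<phi> ` H)"
        using ci_transport[OF i2 h2 a] .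
      moreover have "\<psi> ` \<phi> ` D = D" unfolding \<psi>_def using assms(1) by simp
      moreover have "image \<psi> ` image \<phi> ` H = H"
      proof -
        have "image \<psi> ` image \<phi> ` H = (\<lambda>e. \<psi> ` \<phi> ` e) ` H" by (simp add: image_image)
        also have "\<dots> = (\<lambda>e. e) ` H"
        proof (rule image_cong[OF refl])
          fix e assume "e \<in> H"
          then have "e \<subseteq> D" using HP by auto
          then show "\<psi> ` \<phi> ` e = e" unfolding \<psi>_def using assms(1) by simp
        qed
        finally show ?thesis by simp
      qed
      ultimately show "contains_induced r F D H" by simp
    qed
    then show "(if contains_induced r F (\<phi> ` D) (image \<phi> ` H) then 0 else 1) =
               (if contains_induced r F D H then 0 else (1::real))" by simp
  qed
  finally show ?thesis .
qed

lemma Qf_card: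
  assumes "finite D" "card D = m"
  shows "Qf p r F D = Qf p r F {..<m}"
proof -
  obtain h where h: "bij_betw h D {0..<m}" using ex_bij_betw_finite_nat[OF assms(1)] assms(2) by blast
  then have "h ` D = {..<m}" "inj_on h D" by (auto simp: bij_betw_def)
  then show ?thesis using Qf_transport[of h D p r F] assms(1) by simp
qed



lemma Qf_nonneg: "finite D \<Longrightarrow> 0 \<le> p \<Longrightarrow> p \<le> 1 \<Longrightarrow> 0 \<le> Qf p r F D"
  unfolding Qf_def ex_def by (intro sum_nonneg) (auto simp: wt_def)

lemma Qf_le1: "finite D \<Longrightarrow> 0 \<le> p \<Longrightarrow> p \<le> 1 \<Longrightarrow> Qf p r F D \<le> 1"
proof -
  assume a: "finite D" "0 \<le> p" "p \<le> 1"
  have "Qf p r F D \<le> ex p (rsets r D) (\<lambda>_. 1)" unfolding Qf_def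
    using a finite_rsets by (intro ex_mono) auto
  then show ?thesis using ex_const[OF finite_rsets[OF a(1)]] by simp
qed

lemma mu_free_Qf:
  fixes n :: nat
  shows "mu p r {..<n} {G \<in> hyps r {..<n}. \<not> contains_induced r F {..<n} G} = Qf p r F {..<n}"
proof -
  have "mu p r {..<n} {G \<in> hyps r {..<n}. \<not> contains_induced r F {..<n} G} =
    ex p (rsets r {..<n}) (\<lambda>G. if G \<in> {G \<in> hyps r {..<n}. \<not> contains_induced r F {..<n} G} then 1 else 0)"
    by (rule mu_ex) simp
  also have "\<dots> = Qf p r F {..<n}" unfolding Qf_def by (intro excong) (auto simp: hyps_def)
  finally show ?thesis .
qed

lemma cconst_eq:
  "cconst p r F = lim (\<lambda>n. - log 2 (Qf p r F {..<n}) / real (n choose r))"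
  unfolding cconst_def mu_free_Qf ..

lemma Qf_step:
  assumes "r \<le> n" "0 \<le> p" "p \<le> 1"
  shows "Qf p r F {..<Suc n} \<le> root (Suc n - r) (Qf p r F {..<n}) ^ Suc n"
proof -
  define I where "I = {..<Suc n}"
  define X where "X = rsets r I"
  define k where "k = Suc n - r"
  define S where "S v = rsets r (I - {v})" for v
  define f where "f v H = (if contains_induced r F (I - {v}) H then 0 else (1::real))" for v H
  have k0: "k > 0" unfolding k_def using assms by simp
  have fX: "finite X" unfolding X_def I_def by (simp add: finite_rsets)
  have "Qf p r F {..<Suc n} = ex p X (\<lambda>G. if contains_induced r F I G then 0 else 1)"
    unfolding Qf_def X_def I_def ..
  also have "\<dots> \<le> ex p X (\<lambda>G. \<Prod>v\<in>I. f v (G \<inter> S v))"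
  proof (intro ex_mono fX assms(2,3))
    fix G assume "G \<subseteq> X"
    show "(if contains_induced r F I G then 0 else 1) \<le> (\<Prod>v\<in>I. f v (G \<inter> S v))"
    proof (cases "contains_induced r F I G")
      case True then show ?thesis unfolding f_def by (simp add: prod_nonneg)
    next
      case False
      have "f v (G \<inter> S v) = 1" for v
      proof -
        have "\<not> contains_induced r F (I - {v}) (G \<inter> S v)"
        proof
          assume "contains_induced r F (I - {v}) (G \<inter> S v)"
          then have "contains_induced r F (I - {v}) G" unfolding S_def using ci_local by metis
          then have "contains_induced r F I G" by (rule ci_mono) auto
          then show False using False by simp
        qed
        then show ?thesis unfolding f_def by simp
      qed
      then show ?thesis using False by simp
    qed
  qed
  also have "\<dots> \<le> (\<Prod>v\<in>I. root k (ex p (S v) (\<lambda>H. f v H ^ k)))"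
  proof (rule finner[OF fX _ assms(2,3) k0])
    show "finite I" unfolding I_def by simp
    show "S v \<subseteq> X" if "v \<in> I" for v unfolding S_def X_def rsets_def by auto
    show "0 \<le> f v H" for v H unfolding f_def by simp
    show "card {v\<in>I. e \<in> S v} = k" if e: "e \<in> X" for e
    proof -
      have eI: "e \<subseteq> I" "card e = r" using e unfolding X_def rsets_def by auto
      have "{v\<in>I. e \<in> S v} = I - e" unfolding S_def rsets_def using eI by auto
      moreover have "card (I - e) = Suc n - r" using eI unfolding I_def
        by (simp add: card_Diff_subset finite_subset)
      ultimately show ?thesis unfolding k_def by simp
    qed
  qed
  also have "\<dots> = (\<Prod>v\<in>I. root k (Qf p r F {..<n}))"
  proof (intro prod.cong refl)
    fix v assume v: "v \<in> I"
    have "ex p (S v) (\<lambda>H. f v H ^ k) = Qf p r F (I - {v})"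
      unfolding Qf_def S_def f_def using k0 by (intro excong) simp
    also have "\<dots> = Qf p r F {..<n}"
      using v unfolding I_def by (intro Qf_card) auto
    finally show "root k (ex p (S v) (\<lambda>H. f v H ^ k)) = root k (Qf p r F {..<n})" by simp
  qed
  also have "\<dots> = root k (Qf p r F {..<n}) ^ Suc n" unfolding I_def by simp
  finally show ?thesis unfolding k_def .
qed

lemma Qf_lower:
  assumes "finite D" "0 < p" "p < 1" "Qf p r F D > 0"
  shows "Qf p r F D \<ge> min p (1-p) ^ (card D choose r)"
proof -
  define X where "X = rsets r D"
  define h where "h H = (if contains_induced r F D H then 0 else (1::real))" for H
  have fX: "finite X" unfolding X_def using assms by (simp add: finite_rsets)
  obtain G where G: "G \<in> Pow X" "h G \<noteq> 0"
  proof (rule ccontr)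
    assume "\<not> thesis"
    then have "\<forall>G\<in>Pow X. h G = 0" using that by blast
    then have "Qf p r F D = 0" unfolding Qf_def ex_def X_def[symmetric] h_def[symmetric] by simp
    then show False using assms by simp
  qed
  have hG: "h G = 1" using G unfolding h_def by (simp split: if_splits)
  have cG: "card G \<le> card X" using G fX by (simp add: card_mono)
  have "min p (1-p) ^ (card D choose r) = min p (1-p) ^ card G * min p (1-p) ^ (card X - card G)"
    using cG card_rsets[OF assms(1)] unfolding X_def by (simp add: power_add[symmetric])
  also have "\<dots> \<le> wt p X G" unfolding wt_def using assms
    by (intro mult_mono power_mono) auto
  also have "\<dots> = wt p X G * h G" using hG by simp
  also have "\<dots> \<le> (\<Sum>H\<in>Pow X. wt p X H * h H)"
    using G fX assms by (intro member_le_sum) (auto simp: wt_def h_def)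
  also have "\<dots> = Qf p r F D" unfolding Qf_def ex_def X_def h_def ..
  finally show ?thesis .
qed

lemma Qf_zero:
  assumes "finite D" "0 < p" "p < 1" "Qf p r F D = 0"
  shows "contains_induced r F D G"
proof -
  define X where "X = rsets r D"
  have fX: "finite X" unfolding X_def using assms by (simp add: finite_rsets)
  have "(\<Sum>H\<in>Pow X. wt p X H * (if contains_induced r F D H then 0 else 1)) = 0"
    using assms(4) unfolding Qf_def ex_def X_def .
  then have "\<forall>H\<in>Pow X. wt p X H * (if contains_induced r F D H then 0 else 1) = 0"
    using fX assms by (subst (asm) sum_nonneg_eq_0_iff) (auto simp: wt_def)
  moreover have "G \<inter> X \<in> Pow X" by auto
  ultimately have "wt p X (G \<inter> X) * (if contains_induced r F D (G \<inter> X) then 0 else 1) = 0" by blast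
  moreover have "wt p X (G \<inter> X) > 0" using assms by (simp add: wt_pos)
  ultimately have "contains_induced r F D (G \<inter> X)" by (simp split: if_splits)
  then show ?thesis using ci_local unfolding X_def by metis
qed



definition cs :: "real \<Rightarrow> nat \<Rightarrow> (nat set \<times> nat set set) set \<Rightarrow> nat \<Rightarrow> real" where
  "cs p r F n = - log 2 (Qf p r F {..<n}) / real (n choose r)"

lemma cs_bounds:
  assumes "0 < p" "p < 1" "Qf p r F {..<n} > 0"
  shows "0 \<le> cs p r F n" "cs p r F n \<le> - log 2 (min p (1-p))"
proof -
  define a where "a = Qf p r F {..<n}"
  have a1: "a \<le> 1" unfolding a_def using assms by (intro Qf_le1) auto
  have a0: "a > 0" using assms a_def by simp
  have la: "log 2 a \<le> 0" using a0 a1 by simp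
  then show "0 \<le> cs p r F n" unfolding cs_def a_def[symmetric] by (simp add: divide_nonpos_nonneg)
  define m0 where "m0 = min p (1-p)"
  have m0: "0 < m0" "m0 < 1" unfolding m0_def using assms by auto
  have lm: "log 2 m0 < 0" using m0 by simp
  show "cs p r F n \<le> - log 2 (min p (1-p))"
  proof (cases "n choose r = 0")
    case True
    then have z: "real (n choose r) = 0" by simp
    show ?thesis unfolding cs_def z using lm m0_def by simp
  next
    case False
    have "a \<ge> m0 ^ (n choose r)" unfolding a_def m0_def using Qf_lower[of "{..<n}" p r F] assms by simp
    then have "log 2 a \<ge> log 2 (m0 ^ (n choose r))" using m0 a0 by simp
    then have "log 2 a \<ge> real (n choose r) * log 2 m0" using m0 by (simp add: log_nat_power)
    then have "- log 2 a \<le> real (n choose r) * (- log 2 m0)" by simp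
    have Npos: "real (n choose r) > 0" using False by simp
    then show ?thesis unfolding cs_def a_def[symmetric] m0_def[symmetric] using \<open>- log 2 a \<le> real (n choose r) * (- log 2 m0)\<close>
      by (simp add: field_simps)
  qed
qed

lemma cs_mono_step:
  assumes "0 < p" "p < 1" "r \<le> n" "Qf p r F {..<n} > 0" "Qf p r F {..<Suc n} > 0"
  shows "cs p r F n \<le> cs p r F (Suc n)"
proof -
  define a where "a = Qf p r F {..<n}"
  define b where "b = Qf p r F {..<Suc n}"
  define k where "k = Suc n - r"
  have k0: "k > 0" unfolding k_def using assms by simp
  have a0: "a > 0" "b > 0" using assms a_def b_def by auto
  have N0: "(n choose r) > 0" using assms by simp
  have N1: "(Suc n choose r) > 0" using assms by simp
  have h: "k * (Suc n choose r) = Suc n * (n choose r)"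
    unfolding k_def using binomial_absorb_comp[of "Suc n" r] by simp
  have id: "real k * real (Suc n choose r) = real (Suc n) * real (n choose r)"
    by (simp only: of_nat_mult[symmetric] h)
  have "b \<le> root k a ^ Suc n" unfolding a_def b_def k_def using Qf_step[of r n p F] assms by simp
  then have "log 2 b \<le> log 2 (root k a ^ Suc n)" using a0 k0 by (simp add: real_root_gt_zero)
  also have "\<dots> = real (Suc n) * log 2 (root k a)" using a0 by (intro log_nat_power real_root_ge_zero) simp
  also have "\<dots> = real (Suc n) * (log 2 a / k)" using a0 k0 by (simp add: log_root)
  finally have L0: "log 2 b \<le> real (Suc n) * (log 2 a / k)" .
  have "real (Suc n) * (log 2 a / k) = real (Suc n) * log 2 a / k" by simp
  have kpos: "real k > 0" using k0 by simp
  have L: "- log 2 b \<ge> - real (Suc n) * log 2 a / k" using L0 kpos by (simp add: field_simps)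
  have "(- real (Suc n) * log 2 a / k) / real (Suc n choose r) = (real (Suc n) * (- log 2 a)) / (real k * real (Suc n choose r))"
    by (simp add: divide_divide_eq_left minus_divide_left[symmetric] algebra_simps)
  also have "\<dots> = (real (Suc n) * (- log 2 a)) / (real (Suc n) * real (n choose r))" using id by simp
  also have "\<dots> = (- log 2 a) / real (n choose r)" by (rule mult_divide_mult_cancel_left) simp
  finally have "cs p r F n = (- real (Suc n) * log 2 a / k) / real (Suc n choose r)"
    unfolding cs_def a_def[symmetric] by simp
  also have "\<dots> \<le> (- log 2 b) / real (Suc n choose r)"
    by (rule divide_right_mono[OF L]) simp
  also have "\<dots> = cs p r F (Suc n)" unfolding cs_def b_def ..
  finally show ?thesis .
qed

lemma cs_conv:
  assumes "0 < p" "p < 1" "\<And>n::nat. Qf p r F {..<n} > 0"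
  shows "cs p r F \<longlonglongrightarrow> cconst p r F"
proof -
  have mono: "cs p r F m \<le> cs p r F n" if "r \<le> m" "m \<le> n" for m n
    using that(2,1)
  proof (induction n rule: dec_induct)
    case base then show ?case by simp
  next
    case (step n)
    have "r \<le> n" using step by simp
    then have "cs p r F n \<le> cs p r F (Suc n)" using cs_mono_step[of p r n F, OF assms(1,2) _ assms(3)[of n] assms(3)[of "Suc n"]] by blast
    then show ?case using step by simp
  qed
  have B: "Bseq (\<lambda>n. cs p r F (n + r))"
  proof (rule BseqI')
    fix n show "norm (cs p r F (n + r)) \<le> - log 2 (min p (1-p))"
      using cs_bounds[of p r F "n + r"] assms by simp
  qed
  have "convergent (cs p r F)"
    using Bseq_monoseq_convergent'_inc[OF B] mono by blast
  then have "cs p r F \<longlonglongrightarrow> lim (cs p r F)" by (simp add: convergent_LIMSEQ_iff)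
  moreover have "lim (cs p r F) = cconst p r F"
    unfolding cconst_eq cs_def by (simp add: fun_eq_iff)
  ultimately show ?thesis by simp
qed



lemma ex_sum: "finite T \<Longrightarrow> ex p X (\<lambda>G. \<Sum>t\<in>T. g t G) = (\<Sum>t\<in>T. ex p X (g t))"
  unfolding ex_def by (simp add: sum_distrib_left sum.swap[of _ T])

lemma steiner_fin:
  assumes "finite V" "partial_steiner r m V \<D>"
  shows "finite \<D>"
proof -
  have "\<D> \<subseteq> Pow V" using assms(2) unfolding partial_steiner_def by auto
  then show ?thesis using assms(1) finite_subset by blast
qed

lemma steiner_disj:
  assumes "finite V" "partial_steiner r m V \<D>" "D1 \<in> \<D>" "D2 \<in> \<D>" "D1 \<noteq> D2"
  shows "rsets r D1 \<inter> rsets r D2 = {}"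
proof (rule ccontr)
  assume "rsets r D1 \<inter> rsets r D2 \<noteq> {}"
  then obtain e where e: "e \<subseteq> D1" "e \<subseteq> D2" "card e = r" unfolding rsets_def by auto
  have "D1 \<subseteq> V" using assms unfolding partial_steiner_def by auto
  then have "e \<in> rsets r V" using e unfolding rsets_def by auto
  then have le: "card {D\<in>\<D>. e \<subseteq> D} \<le> 1" using assms(2) unfolding partial_steiner_def by auto
  have "{D1, D2} \<subseteq> {D\<in>\<D>. e \<subseteq> D}" using e assms by auto
  moreover have "finite {D\<in>\<D>. e \<subseteq> D}" using steiner_fin[OF assms(1,2)] by simp
  ultimately have "card {D1, D2} \<le> card {D\<in>\<D>. e \<subseteq> D}" by (rule card_mono[rotated])
  then show False using le assms(5) by simp
qed

lemma steiner_count: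
  assumes "finite V" "partial_steiner r m V \<D>"
  shows "card \<D> * (m choose r) \<le> card V choose r"
proof -
  have fD: "finite \<D>" using steiner_fin[OF assms] .
  have Dm: "\<And>D. D \<in> \<D> \<Longrightarrow> D \<subseteq> V \<and> card D = m" using assms(2) unfolding partial_steiner_def by auto
  have fin: "\<forall>D\<in>\<D>. finite (rsets r D)" using Dm assms(1) by (meson finite_rsets finite_subset)
  have "card (\<Union>D\<in>\<D>. rsets r D) = (\<Sum>D\<in>\<D>. card (rsets r D))"
    using fD fin steiner_disj[OF assms] by (intro card_UN_disjoint) auto
  also have "\<dots> = (\<Sum>D\<in>\<D>. m choose r)"
    using Dm assms(1) by (intro sum.cong refl) (metis card_rsets finite_subset)
  finally have 1: "card (\<Union>D\<in>\<D>. rsets r D) = card \<D> * (m choose r)" by simp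
  have "(\<Union>D\<in>\<D>. rsets r D) \<subseteq> rsets r V" using Dm unfolding rsets_def by auto
  then have "card (\<Union>D\<in>\<D>. rsets r D) \<le> card (rsets r V)"
    using assms(1) by (intro card_mono finite_rsets)
  then show ?thesis using 1 card_rsets[OF assms(1)] by simp
qed

lemma union_bound:
  fixes V :: "'a set"
  assumes "finite V" "partial_steiner r m V \<D>" "0 < p" "p < 1"
  shows "ex p (rsets r V) (\<lambda>G. if t \<le> card {D\<in>\<D>. \<not> contains_induced r F D G} then 1 else 0)
         \<le> 2 ^ card \<D> * Qf p r F {..<m} ^ t"
proof -
  define X where "X = rsets r V"
  define TT where "TT = {T. T \<subseteq> \<D> \<and> card T = t}"
  define h where "h (D::'a set) H = (if contains_induced r F D H then 0 else (1::real))" for D H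
  have fD: "finite \<D>" using steiner_fin[OF assms(1,2)] .
  have fTT: "finite TT" unfolding TT_def using fD by simp
  have fX: "finite X" unfolding X_def using assms(1) by (simp add: finite_rsets)
  have Dm: "\<And>D. D \<in> \<D> \<Longrightarrow> D \<subseteq> V \<and> card D = m" using assms(2) unfolding partial_steiner_def by auto
  have "ex p X (\<lambda>G. if t \<le> card {D\<in>\<D>. \<not> contains_induced r F D G} then 1 else 0)
        \<le> ex p X (\<lambda>G. \<Sum>T\<in>TT. \<Prod>D\<in>T. h D (G \<inter> rsets r D))"
  proof (intro ex_mono fX)
    show "0 \<le> p" "p \<le> 1" using assms by auto
    fix G assume "G \<subseteq> X"
    have nn: "0 \<le> (\<Prod>D\<in>T. h D (G \<inter> rsets r D))" for T unfolding h_def by (simp add: prod_nonneg)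
    show "(if t \<le> card {D\<in>\<D>. \<not> contains_induced r F D G} then 1 else 0) \<le> (\<Sum>T\<in>TT. \<Prod>D\<in>T. h D (G \<inter> rsets r D))"
    proof (cases "t \<le> card {D\<in>\<D>. \<not> contains_induced r F D G}")
      case True
      then obtain T where T: "T \<subseteq> {D\<in>\<D>. \<not> contains_induced r F D G}" "card T = t"
        by (meson obtain_subset_with_card_n)
      then have TT: "T \<in> TT" unfolding TT_def by auto
      have "(\<Prod>D\<in>T. h D (G \<inter> rsets r D)) = 1"
      proof (intro prod.neutral ballI)
        fix D assume "D \<in> T"
        then have "\<not> contains_induced r F D G" using T by auto
        then have "\<not> contains_induced r F D (G \<inter> rsets r D)" using ci_local by metis
        then show "h D (G \<inter> rsets r D) = 1" unfolding h_def by simp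
      qed
      then have "1 \<le> (\<Sum>T\<in>TT. \<Prod>D\<in>T. h D (G \<inter> rsets r D))"
        using member_le_sum[OF TT, of "\<lambda>T. \<Prod>D\<in>T. h D (G \<inter> rsets r D)"] nn fTT by simp
      then show ?thesis using True by simp
    next
      case False then show ?thesis using nn by (simp add: sum_nonneg)
    qed
  qed
  also have "\<dots> = (\<Sum>T\<in>TT. ex p X (\<lambda>G. \<Prod>D\<in>T. h D (G \<inter> rsets r D)))"
    using fTT by (rule ex_sum)
  also have "\<dots> = (\<Sum>T\<in>TT. Qf p r F {..<m} ^ t)"
  proof (intro sum.cong refl)
    fix T assume "T \<in> TT"
    then have T: "T \<subseteq> \<D>" "card T = t" unfolding TT_def by auto
    have fT: "finite T" using T fD finite_subset by blast
    have "ex p X (\<lambda>G. \<Prod>D\<in>T. h D (G \<inter> rsets r D)) = (\<Prod>D\<in>T. ex p (rsets r D) (h D))"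
    proof (rule ex_prod[OF fT fX])
      show "rsets r D \<subseteq> X" if "D \<in> T" for D using Dm[of D] that T unfolding X_def rsets_def by auto
      show "rsets r D1 \<inter> rsets r D2 = {}" if "D1 \<in> T" "D2 \<in> T" "D1 \<noteq> D2" for D1 D2
        using steiner_disj[OF assms(1,2)] that T by auto
    qed
    also have "\<dots> = (\<Prod>D\<in>T. Qf p r F {..<m})"
    proof (intro prod.cong refl)
      fix D assume "D \<in> T"
      then have "D \<subseteq> V" "card D = m" using Dm T by auto
      then have "Qf p r F D = Qf p r F {..<m}" using assms(1) finite_subset by (intro Qf_card) auto
      then show "ex p (rsets r D) (h D) = Qf p r F {..<m}" unfolding Qf_def h_def by simp
    qed
    also have "\<dots> = Qf p r F {..<m} ^ t" using T by simp
    finally show "ex p X (\<lambda>G. \<Prod>D\<in>T. h D (G \<inter> rsets r D)) = Qf p r F {..<m} ^ t" .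
  qed
  also have "\<dots> = real (card TT) * Qf p r F {..<m} ^ t" by simp
  also have "\<dots> \<le> 2 ^ card \<D> * Qf p r F {..<m} ^ t"
  proof (rule mult_right_mono)
    have "TT \<subseteq> Pow \<D>" unfolding TT_def by auto
    then have "card TT \<le> card (Pow \<D>)" using fD by (intro card_mono) auto
    then have "card TT \<le> 2 ^ card \<D>" using fD by (simp add: card_Pow)
    then show "real (card TT) \<le> 2 ^ card \<D>" by (metis of_nat_le_iff of_nat_numeral of_nat_power)
    show "0 \<le> Qf p r F {..<m} ^ t" using assms by (simp add: Qf_nonneg)
  qed
  finally show ?thesis unfolding X_def .
qed



lemma card_split_filter:
  "finite S \<Longrightarrow> card {x\<in>S. P x} + card {x\<in>S. \<not> P x} = card S"
proof -
  assume f: "finite S"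
  have "card ({x\<in>S. P x} \<union> {x\<in>S. \<not> P x}) = card {x\<in>S. P x} + card {x\<in>S. \<not> P x}"
    using f by (intro card_Un_disjoint) auto
  moreover have "{x\<in>S. P x} \<union> {x\<in>S. \<not> P x} = S" by auto
  ultimately show ?thesis by simp
qed

lemma main_bound:
  fixes V :: "'a set"
  assumes "finite V" "A \<subseteq> hyps r V" "partial_steiner r m V \<D>" "0 < p" "p < 1" "t \<le> card \<D>" "0 \<le> \<gamma>"
    "2 * (real (card {D\<in>\<D>. mu p r V {G\<in>A. contains_induced r F D G} \<ge> \<gamma> * mu p r V A}) + \<gamma> * card \<D>)
       \<le> real (card \<D>) - real t + 1"
  shows "mu p r V A \<le> 2 * (2 ^ card \<D> * Qf p r F {..<m} ^ t)"
proof -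
  define X where "X = rsets r V"
  define W where "W = mu p r V A"
  define d where "d = card \<D>"
  define iA where "iA G = (if G \<in> A then 1 else (0::real))" for G
  define good where "good G = (t \<le> card {D\<in>\<D>. \<not> contains_induced r F D G})" for G
  define Yc where "Yc G = card {D\<in>\<D>. contains_induced r F D G}" for G
  define I where "I = {D\<in>\<D>. mu p r V {G\<in>A. contains_induced r F D G} \<ge> \<gamma> * mu p r V A}"
  define mD where "mD D = mu p r V {G\<in>A. contains_induced r F D G}" for D
  have fD: "finite \<D>" using steiner_fin[OF assms(1,3)] .
  have fX: "finite X" unfolding X_def using assms(1) by (simp add: finite_rsets)
  have p01: "0 \<le> p" "p \<le> 1" using assms by auto
  have W: "W = ex p X iA" unfolding W_def X_def iA_def using assms(1) by (rule mu_ex)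
  have W0: "0 \<le> W" unfolding W ex_def iA_def using p01 by (intro sum_nonneg) (auto simp: wt_def)
  have mD: "mD D = ex p X (\<lambda>G. iA G * (if contains_induced r F D G then 1 else 0))" for D
    unfolding mD_def X_def iA_def using assms(1) by (subst mu_ex) (auto intro!: excong)
  have mDW: "mD D \<le> W" for D unfolding mD W iA_def using fX p01 by (intro ex_mono) auto
  have split: "W = ex p X (\<lambda>G. iA G * (if good G then 1 else 0)) + ex p X (\<lambda>G. iA G * (if good G then 0 else 1))"
    unfolding W ex_add[symmetric] by (intro excong) simp
  have E1: "ex p X (\<lambda>G. iA G * (if good G then 1 else 0)) \<le> 2 ^ card \<D> * Qf p r F {..<m} ^ t"
  proof -
    have "ex p X (\<lambda>G. iA G * (if good G then 1 else 0)) \<le> ex p X (\<lambda>G. if good G then 1 else 0)"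
      using fX p01 by (intro ex_mono) (auto simp: iA_def)
    also have "\<dots> \<le> 2 ^ card \<D> * Qf p r F {..<m} ^ t"
      unfolding X_def good_def using union_bound[OF assms(1,3,4,5)] by blast
    finally show ?thesis .
  qed
  define E2 where "E2 = ex p X (\<lambda>G. iA G * (if good G then 0 else 1))"
  have "(real d - real t + 1) * E2 \<le> ex p X (\<lambda>G. iA G * real (Yc G))"
    unfolding E2_def ex_cmult[symmetric]
  proof (intro ex_mono fX p01)
    fix G assume "G \<subseteq> X"
    show "(real d - real t + 1) * (iA G * (if good G then 0 else 1)) \<le> iA G * real (Yc G)"
    proof (cases "good G")
      case True then show ?thesis unfolding iA_def Yc_def by simp
    next
      case False
      then have "card {D\<in>\<D>. \<not> contains_induced r F D G} < t" unfolding good_def by simp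
      moreover have "Yc G + card {D\<in>\<D>. \<not> contains_induced r F D G} = d"
        unfolding Yc_def d_def using card_split_filter[OF fD] .
      ultimately have "real d - real t + 1 \<le> real (Yc G)" by linarith
      then show ?thesis using False unfolding iA_def by simp
    qed
  qed
  also have "ex p X (\<lambda>G. iA G * real (Yc G)) = (\<Sum>D\<in>\<D>. mD D)"
  proof -
    have "ex p X (\<lambda>G. iA G * real (Yc G)) = ex p X (\<lambda>G. \<Sum>D\<in>\<D>. iA G * (if contains_induced r F D G then 1 else 0))"
    proof (intro excong)
      fix G
      have "real (Yc G) = (\<Sum>D\<in>\<D>. if contains_induced r F D G then 1 else 0)"
        unfolding Yc_def using fD by (simp add: sum.inter_filter[symmetric])
      then show "iA G * real (Yc G) = (\<Sum>D\<in>\<D>. iA G * (if contains_induced r F D G then 1 else 0))"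
        by (simp add: sum_distrib_left)
    qed
    also have "\<dots> = (\<Sum>D\<in>\<D>. mD D)" using fD by (simp add: ex_sum mD)
    finally show ?thesis .
  qed
  also have "\<dots> \<le> real (card I) * W + \<gamma> * real d * W"
  proof -
    have IS: "I \<subseteq> \<D>" unfolding I_def by auto
    have "(\<Sum>D\<in>\<D>. mD D) = (\<Sum>D\<in>\<D>-I. mD D) + (\<Sum>D\<in>I. mD D)"
      using sum.subset_diff[OF IS fD] .
    also have "(\<Sum>D\<in>I. mD D) \<le> (\<Sum>D\<in>I. W)" using mDW by (intro sum_mono) auto
    also have "(\<Sum>D\<in>\<D>-I. mD D) \<le> (\<Sum>D\<in>\<D>-I. \<gamma> * W)"
      by (intro sum_mono) (auto simp: I_def mD_def W_def)
    also have "(\<Sum>D\<in>\<D>-I. \<gamma> * W) \<le> \<gamma> * real d * W"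
    proof -
      have "card (\<D> - I) \<le> d" unfolding d_def using fD by (simp add: card_mono)
      then have "real (card (\<D> - I)) * (\<gamma> * W) \<le> real d * (\<gamma> * W)"
        using assms(7) W0 by (intro mult_right_mono) auto
      then show ?thesis by (simp add: algebra_simps)
    qed
    finally show ?thesis by (simp add: algebra_simps)
  qed
  finally have E2b: "(real d - real t + 1) * E2 \<le> (real (card I) + \<gamma> * real d) * W" by (simp add: algebra_simps)
  have pos: "real d - real t + 1 > 0" using assms(6) unfolding d_def by simp
  have "2 * (real (card I) + \<gamma> * real d) \<le> real d - real t + 1"
    using assms(8) unfolding I_def d_def by simp
  then have "(real (card I) + \<gamma> * real d) * W \<le> ((real d - real t + 1) / 2) * W"
    using W0 by (intro mult_right_mono) auto
  then have "(real d - real t + 1) * E2 \<le> (real d - real t + 1) * (W / 2)" using E2b by simp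
  then have "E2 \<le> W / 2" using pos by simp
  then have "W \<le> 2 * (2 ^ card \<D> * Qf p r F {..<m} ^ t)" using split E1 unfolding E2_def by linarith
  then show ?thesis unfolding W_def .
qed



lemma arith_final:
  fixes c cm \<epsilon> B \<delta> N M d LW :: real
  assumes "\<epsilon> > 0" "B \<ge> 0" "\<delta> = \<epsilon> / (8 * (B + 1 + \<epsilon>))" "0 \<le> cm" "cm \<le> B" "c - \<epsilon>/4 < cm"
    "M \<ge> 8/\<epsilon>" "N \<ge> 8/\<epsilon>" "d * M \<le> N" "d \<ge> (1-\<delta>) * N / M" "d \<ge> 0"
    "LW \<le> 1 + d - (1-\<delta>) * d * (cm * M)" "LW > (-c+\<epsilon>) * N"
  shows False
proof -
  have Mpos: "M > 0" using assms(1,7) by (smt (verit) divide_pos_pos)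
  have Npos: "N > 0" using assms(1,8) by (smt (verit) divide_pos_pos)
  have den: "8 * (B + 1 + \<epsilon>) > 0" using assms(1,2) by simp
  have d0: "0 < \<delta>" "\<delta> \<le> 1/8"
  proof -
    show "0 < \<delta>" unfolding assms(3) using den assms(1) by simp
    have "\<epsilon> \<le> 1/8 * (8 * (B + 1 + \<epsilon>))" using assms(2) by simp
    then show "\<delta> \<le> 1/8" unfolding assms(3) using den by (simp only: pos_divide_le_eq)
  qed
  have "d * (8/\<epsilon>) \<le> d * M" using assms(7,11) by (intro mult_left_mono) auto
  then have "d * (8/\<epsilon>) \<le> N" using assms(9) by linarith
  then have dN: "d \<le> \<epsilon> * N / 8" using assms(1) by (simp add: field_simps)
  have oneN: "1 \<le> \<epsilon> * N / 8" using assms(1,8) by (simp add: field_simps)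
  have dM: "d * M \<ge> (1-\<delta>) * N" using assms(10) Mpos by (simp add: field_simps)
  have "(1-\<delta>) * d * (cm * M) = ((1-\<delta>) * cm) * (d * M)" by (simp add: algebra_simps)
  also have "\<dots> \<ge> ((1-\<delta>) * cm) * ((1-\<delta>) * N)"
    using dM d0 assms(4) by (intro mult_left_mono) auto
  finally have A1: "(1-\<delta>) * d * (cm * M) \<ge> (1-\<delta>)^2 * cm * N" by (simp add: power2_eq_square algebra_simps)
  have "(1-\<delta>)^2 \<ge> 1 - 2*\<delta>" by (simp add: power2_eq_square algebra_simps)
  then have "(1-\<delta>)^2 * (cm * N) \<ge> (1 - 2*\<delta>) * (cm * N)" using assms(4) Npos by (intro mult_right_mono) auto
  then have A2: "(1-\<delta>) * d * (cm * M) \<ge> cm * N - 2*\<delta>*cm*N" using A1 by (simp add: algebra_simps)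
  have "2*\<delta>*cm \<le> 2*\<delta>*B" using d0 assms(5) by simp
  also have "2*\<delta>*B \<le> \<epsilon>/4"
  proof -
    have "2*\<delta>*B = (\<epsilon>/4) * (B/(B+1+\<epsilon>))" using assms(1,2,3) by (simp add: field_simps)
    also have "\<dots> \<le> (\<epsilon>/4) * 1" using assms(1,2) by (intro mult_left_mono) auto
    finally show ?thesis by simp
  qed
  finally have "2*\<delta>*cm*N \<le> (\<epsilon>/4) * N" using Npos by (intro mult_right_mono) auto
  then have A3: "(1-\<delta>) * d * (cm * M) \<ge> cm * N - (\<epsilon>/4)*N" using A2 by linarith
  have "cm * N \<ge> (c - \<epsilon>/4) * N" using assms(6) Npos by (intro mult_right_mono) auto
  then have "LW \<le> (\<epsilon>*N/8) + (\<epsilon>*N/8) - (c - \<epsilon>/4) * N + (\<epsilon>/4)*N"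
    using assms(12) A3 dN oneN by linarith
  then have "LW \<le> (-c + 3*\<epsilon>/4) * N" by (simp add: algebra_simps)
  moreover have "(-c + 3*\<epsilon>/4) * N < (-c+\<epsilon>) * N" using Npos assms(1) by (intro mult_strict_right_mono) auto
  ultimately show False using assms(13) by linarith
qed



lemma mu_nonneg: "0 \<le> p \<Longrightarrow> p \<le> 1 \<Longrightarrow> 0 \<le> mu p r V A"
  unfolding mu_def by (intro sum_nonneg) simp

lemma binom_big:
  fixes \<epsilon> :: real
  assumes "1 \<le> r" "r \<le> m" "real m \<ge> 8 * r / \<epsilon>" "\<epsilon> > 0"
  shows "real (m choose r) \<ge> 8 / \<epsilon>"
proof -
  have rpos: "real r > 0" using assms by simp
  have "real m / real r \<ge> 8 / \<epsilon>" using assms(3,4) rpos by (simp add: field_simps)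
  moreover have "real m / real r \<ge> 1" using assms rpos by simp
  then have "real m / real r \<le> (real m / real r) ^ r" using assms(1) by (intro self_le_power) auto
  moreover have "(real m / real r) ^ r \<le> real (m choose r)" using binomial_ge_n_over_k_pow_k[OF assms(2)] by simp
  ultimately show ?thesis by linarith
qed

lemma zero_case:
  assumes "Qf p r F {..<m0} = 0" "0 < p" "p < 1" "finite V" "A \<subseteq> hyps r V" "partial_steiner r m0 V \<D>"
  shows "real (card {D \<in> \<D>. mu p r V {G \<in> A. contains_induced r F D G} \<ge> (1/2) * mu p r V A}) \<ge> (1/2) * real (card \<D>)"
proof -
  have "{D \<in> \<D>. mu p r V {G \<in> A. contains_induced r F D G} \<ge> (1/2) * mu p r V A} = \<D>"
  proof (intro set_eqI iffI)
    fix D assume D: "D \<in> \<D>"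
    then have "D \<subseteq> V" "card D = m0" using assms(6) unfolding partial_steiner_def by auto
    then have "Qf p r F D = 0" using assms(1,4) finite_subset by (metis Qf_card)
    then have "\<forall>G. contains_induced r F D G" using assms(2,3,4) \<open>D \<subseteq> V\<close> finite_subset Qf_zero by metis
    then have "{G \<in> A. contains_induced r F D G} = A" by auto
    moreover have "0 \<le> mu p r V A" using assms by (intro mu_nonneg) auto
    ultimately show "D \<in> {D \<in> \<D>. mu p r V {G \<in> A. contains_induced r F D G} \<ge> (1/2) * mu p r V A}"
      using D by auto
  qed auto
  then show ?thesis by simp
qed

theorem lemma5:
  fixes r :: nat and F :: "(nat set \<times> nat set set) set" and p \<epsilon> :: real
  assumes "r \<ge> 2" and "wf_family r F" and "0 < p" and "p < 1" and "\<epsilon> > 0"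
  shows "\<exists>\<eta> \<gamma> lam :: real. \<eta> > 0 \<and> \<gamma> > 0 \<and> lam > 0 \<and>
    (\<exists>m n0 :: nat. \<forall>(V :: nat set) n A \<D>.
       finite V \<longrightarrow> card V = n \<longrightarrow> n > n0 \<longrightarrow> A \<subseteq> hyps r V \<longrightarrow>
       mu p r V A > 2 powr ((- cconst p r F + \<epsilon>) * real (n choose r)) \<longrightarrow>
       partial_steiner r m V \<D> \<longrightarrow>
       real (card \<D>) \<ge> (1 - lam) * real (n choose r) / real (m choose r) \<longrightarrow>
       real (card {D \<in> \<D>. mu p r V {G \<in> A. contains_induced r F D G} \<ge> \<gamma> * mu p r V A})
         \<ge> \<eta> * real (card \<D>))"
proof (cases "\<exists>m::nat. Qf p r F {..<m} = 0")
  case True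
  then obtain m0 :: nat where m0: "Qf p r F {..<m0} = 0" by blast
  show ?thesis
    apply (rule exI[where x="1/2"], rule exI[where x="1/2"], rule exI[where x="1/2"])
    apply (intro conjI, simp, simp, simp)
    apply (rule exI[where x=m0], rule exI[where x=0])
    apply (intro allI impI)
    using zero_case[OF m0 assms(3,4)] by blast
next
  case False
  have pos: "\<And>n::nat. Qf p r F {..<n} > 0"
    using False Qf_nonneg[of "{..<n}" p r F for n] assms(3,4) by (metis finite_lessThan less_eq_real_def less_imp_le)
  define c where "c = cconst p r F"
  have conv: "cs p r F \<longlonglongrightarrow> c" unfolding c_def using cs_conv[OF assms(3,4) pos] .
  define B0 where "B0 = - log 2 (min p (1-p))"
  have B0: "B0 \<ge> 0" unfolding B0_def using assms(3,4) by simp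
  define \<delta> where "\<delta> = \<epsilon> / (8 * (B0 + 1 + \<epsilon>))"
  have \<delta>0: "0 < \<delta>" unfolding \<delta>_def using B0 assms(5) by simp
  have ev1: "eventually (\<lambda>m. c - \<epsilon>/4 < cs p r F m) sequentially"
    using order_tendstoD(1)[OF conv, of "c - \<epsilon>/4"] assms(5) by simp
  have ev2: "eventually (\<lambda>m. nat \<lceil>8 * real r / \<epsilon>\<rceil> + r \<le> m) sequentially"
    by (rule eventually_ge_at_top)
  obtain m where m1: "c - \<epsilon>/4 < cs p r F m" and m2: "nat \<lceil>8 * real r / \<epsilon>\<rceil> + r \<le> m"
    using eventually_happens'[OF _ eventually_conj[OF ev1 ev2]] by auto
  have mr: "r \<le> m" using m2 by simp
  have m8: "real m \<ge> 8 * real r / \<epsilon>" using m2 by linarith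
  define M where "M = real (m choose r)"
  have M8: "M \<ge> 8 / \<epsilon>" unfolding M_def using binom_big[OF _ mr m8 assms(5)] assms(1) by simp
  define n0 where "n0 = nat \<lceil>8 * real r / \<epsilon>\<rceil> + r"
  define q where "q = Qf p r F {..<m}"
  have q0: "0 < q" "q \<le> 1" unfolding q_def using pos assms(3,4) by (auto intro: Qf_le1)
  have cs_b: "0 \<le> cs p r F m" "cs p r F m \<le> B0" unfolding B0_def using cs_bounds[OF assms(3,4) pos] by auto
  have Mpos: "M > 0" using M8 assms(5) by (smt (verit) divide_pos_pos)
  have lq: "log 2 q = - cs p r F m * M" unfolding cs_def q_def[symmetric] M_def[symmetric] using Mpos by simp
  show ?thesis
    apply (rule exI[where x="\<delta>/4"], rule exI[where x="\<delta>/4"], rule exI[where x="\<delta>"])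
    apply (intro conjI)
    using \<delta>0 apply simp
    using \<delta>0 apply simp
    using \<delta>0 apply simp
    apply (rule exI[where x=m], rule exI[where x=n0])
    apply (intro allI impI)
  proof -
    fix V :: "nat set" and n A \<D>
    assume fV: "finite V" and cV: "card V = n" and nn0: "n0 < n" and AV: "A \<subseteq> hyps r V"
      and muA: "2 powr ((- cconst p r F + \<epsilon>) * real (n choose r)) < mu p r V A"
      and st: "partial_steiner r m V \<D>"
      and dl: "(1 - \<delta>) * real (n choose r) / real (m choose r) \<le> real (card \<D>)"
    define d where "d = card \<D>"
    define N where "N = real (n choose r)"
    define I where "I = {D \<in> \<D>. \<delta>/4 * mu p r V A \<le> mu p r V {G \<in> A. contains_induced r F D G}}"
    show "\<delta>/4 * real (card \<D>) \<le> real (card {D \<in> \<D>. \<delta>/4 * mu p r V A \<le> mu p r V {G \<in> A. contains_induced r F D G}})"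
    proof (rule ccontr)
      assume "\<not> ?thesis"
      then have cI: "real (card I) < \<delta>/4 * real d" unfolding I_def d_def by simp
      have n8: "real n \<ge> 8 * real r / \<epsilon>" using nn0 unfolding n0_def by linarith
      have N8: "N \<ge> 8 / \<epsilon>" unfolding N_def using binom_big[OF _ _ n8 assms(5)] assms(1) nn0 n0_def by simp
      have dM: "real d * M \<le> N" unfolding d_def M_def N_def
        using steiner_count[OF fV st] cV by (metis of_nat_le_iff of_nat_mult)
      have dlow: "real d \<ge> (1 - \<delta>) * N / M" using dl unfolding d_def N_def M_def .
      have \<delta>1: "\<delta> \<le> 1"
      proof -
        have "\<epsilon> \<le> 1 * (8 * (B0 + 1 + \<epsilon>))" using B0 assms(5) by simp
        then show ?thesis unfolding \<delta>_def using B0 assms(5) by (simp only: pos_divide_le_eq)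
      qed
      define t where "t = nat \<lceil>(1 - \<delta>) * real d\<rceil>"
      have nn: "(1 - \<delta>) * real d \<ge> 0" using \<delta>1 by simp
      have c0: "\<lceil>(1 - \<delta>) * real d\<rceil> \<ge> 0" using nn by simp
      have rt: "real t = real_of_int \<lceil>(1 - \<delta>) * real d\<rceil>" unfolding t_def using c0 by simp
      have t1: "real t \<ge> (1 - \<delta>) * real d" unfolding rt by (rule le_of_int_ceiling)
      have t2: "real t < (1 - \<delta>) * real d + 1" unfolding rt using ceiling_correct[of "(1 - \<delta>) * real d"] by linarith
      have t3: "t \<le> card \<D>"
      proof -
        have "\<delta> * real d \<ge> 0" using \<delta>0 by simp
        moreover have "(1 - \<delta>) * real d = real d - \<delta> * real d" by (simp add: algebra_simps)
        ultimately have "(1 - \<delta>) * real d \<le> real d" by linarith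
        then have "\<lceil>(1 - \<delta>) * real d\<rceil> \<le> int d" by (simp add: ceiling_le_iff)
        then have "nat \<lceil>(1 - \<delta>) * real d\<rceil> \<le> d" by (simp only: nat_le_iff)
        then show ?thesis unfolding t_def d_def[symmetric] .
      qed
      have cond: "2 * (real (card {D\<in>\<D>. mu p r V {G\<in>A. contains_induced r F D G} \<ge> (\<delta>/4) * mu p r V A}) + (\<delta>/4) * card \<D>)
         \<le> real (card \<D>) - real t + 1"
        using cI t2 unfolding I_def d_def by (simp add: algebra_simps)
      have W: "mu p r V A \<le> 2 * (2 ^ card \<D> * Qf p r F {..<m} ^ t)"
        using main_bound[OF fV AV st assms(3,4) t3 _ cond] \<delta>0 by simp
      have Wpos: "mu p r V A > 0" using muA by (smt (verit) powr_gt_zero)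
      have "log 2 (mu p r V A) \<le> log 2 (2 * (2 ^ d * q ^ t))"
        using W Wpos q0 unfolding d_def q_def by simp
      also have "\<dots> = 1 + real d + real t * log 2 q"
        using q0 by (simp add: log_mult log_nat_power)
      also have "real t * log 2 q \<le> ((1 - \<delta>) * real d) * log 2 q"
        using t1 q0 by (intro mult_right_mono_neg) auto
      finally have LW: "log 2 (mu p r V A) \<le> 1 + real d - (1 - \<delta>) * real d * (cs p r F m * M)"
        unfolding lq by (simp add: algebra_simps)
      have LW2: "log 2 (mu p r V A) > (- c + \<epsilon>) * N"
      proof -
        have "log 2 (2 powr ((- c + \<epsilon>) * N)) < log 2 (mu p r V A)"
          using muA Wpos unfolding c_def N_def by (subst log_less_cancel_iff) auto
        then show ?thesis by simp
      qed
      show False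
        using arith_final[OF assms(5) B0 \<delta>_def cs_b(1) cs_b(2) m1 M8 N8 dM dlow _ LW LW2] by simp
    qed
  qed
qed

end
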